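(* Let $\mathbb F$ be an algebraically closed field of characteristic not two. Every finite-dimensional associative algebra $R$ (without identity) over $\mathbb F$ with $R^3=0$ and $\dim R^2=2$ is isomorphic to exactly one algebra on $\mathbb F^{2+n}$, for some $n\ge 2$, with multiplication \[ uv=\left(u^T\begin{bmatrix}0_2&0\\0&A\end{bmatrix}v,\ u^T\begin{bmatrix}0_2&0\\0&B\end{bmatrix}v,\ 0,\dots,0\right)^T \] given by $n$-by-$n$ matrices $A$ and $B$ that are linearly independent (i.e. $aA+bB=0$ implies $a=b=0$). The pair $(A,B)$ is determined by $R$ uniquely up to congruence $(A,B)\mapsto(S^TAS,S^TBS)$ ($S$ nonsingular) and linear substitutions $(A,B)\mapsto(r_{11}A+r_{12}B,\ r_{21}A+r_{22}B)$ with $[r_{ij}]$ nonsingular.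
   Context: An algebra without identity is a finite-dimensional vector space $R$ over $\mathbb F$ with a bilinear associative multiplication; $R^2$ (resp. $R^3$) is the subspace spanned by all products $uv$ (resp. $uvw$). Here $0_2$ is the $2\times 2$ zero matrix and vectors of $\mathbb F^{2+n}$ are columns. *)

theory Defs
  imports "Jordan_Normal_Form.Determinant" "HOL-Computational_Algebra.Polynomial"
begin

definition alg_closed :: "'a::field itself \<Rightarrow> bool" where
  "alg_closed _ \<longleftrightarrow> (\<forall>p :: 'a poly. degree p \<ge> 1 \<longrightarrow> (\<exists>x. poly p x = 0))"

definition fd_algebra :: "('a::field \<Rightarrow> 'r::ab_group_add \<Rightarrow> 'r) \<Rightarrow> ('r \<Rightarrow> 'r \<Rightarrow> 'r) \<Rightarrow> bool" where
  "fd_algebra sc mul \<longleftrightarrow>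
     (\<exists>B. finite_dimensional_vector_space sc B) \<and>
     (\<forall>x y z. mul (x + y) z = mul x z + mul y z) \<and>
     (\<forall>x y z. mul x (y + z) = mul x y + mul x z) \<and>
     (\<forall>c x y. mul (sc c x) y = sc c (mul x y)) \<and>
     (\<forall>c x y. mul x (sc c y) = sc c (mul x y)) \<and>
     (\<forall>x y z. mul (mul x y) z = mul x (mul y z))"

definition alg_sq :: "('a::field \<Rightarrow> 'r::ab_group_add \<Rightarrow> 'r) \<Rightarrow> ('r \<Rightarrow> 'r \<Rightarrow> 'r) \<Rightarrow> 'r set" where
  "alg_sq sc mul = module.span sc {mul u v | u v. True}"

definition alg_cube :: "('a::field \<Rightarrow> 'r::ab_group_add \<Rightarrow> 'r) \<Rightarrow> ('r \<Rightarrow> 'r \<Rightarrow> 'r) \<Rightarrow> 'r set" where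
  "alg_cube sc mul = module.span sc {mul (mul u v) w | u v w. True}"

definition blk :: "nat \<Rightarrow> 'a::zero mat \<Rightarrow> 'a mat" where
  "blk n A = four_block_mat (0\<^sub>m 2 2) (0\<^sub>m 2 n) (0\<^sub>m n 2) A"

definition mult_AB :: "nat \<Rightarrow> 'a::comm_ring_1 mat \<Rightarrow> 'a mat \<Rightarrow> 'a vec \<Rightarrow> 'a vec \<Rightarrow> 'a vec" where
  "mult_AB n A B u v = vec (2 + n) (\<lambda>i. if i = 0 then u \<bullet> (blk n A *\<^sub>v v)
                                      else if i = 1 then u \<bullet> (blk n B *\<^sub>v v) else 0)"

definition alg_iso_to :: "('a::field \<Rightarrow> 'r::ab_group_add \<Rightarrow> 'r) \<Rightarrow> ('r \<Rightarrow> 'r \<Rightarrow> 'r) \<Rightarrow> nat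
     \<Rightarrow> ('a vec \<Rightarrow> 'a vec \<Rightarrow> 'a vec) \<Rightarrow> bool" where
  "alg_iso_to sc mul m m_mul \<longleftrightarrow>
     (\<exists>\<phi>. bij_betw \<phi> UNIV (carrier_vec m) \<and>
          (\<forall>x y. \<phi> (x + y) = \<phi> x + \<phi> y) \<and>
          (\<forall>c x. \<phi> (sc c x) = c \<cdot>\<^sub>v \<phi> x) \<and>
          (\<forall>x y. \<phi> (mul x y) = m_mul (\<phi> x) (\<phi> y)))"

definition lin_indep_pair :: "nat \<Rightarrow> 'a::field mat \<Rightarrow> 'a mat \<Rightarrow> bool" where
  "lin_indep_pair n A B \<longleftrightarrow>
     (\<forall>a b. a \<cdot>\<^sub>m A + b \<cdot>\<^sub>m B = 0\<^sub>m n n \<longrightarrow> a = 0 \<and> b = 0)"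

definition pair_equiv :: "nat \<Rightarrow> 'a::field mat \<Rightarrow> 'a mat \<Rightarrow> 'a mat \<Rightarrow> 'a mat \<Rightarrow> bool" where
  "pair_equiv n A B A' B' \<longleftrightarrow>
     (\<exists>S r. S \<in> carrier_mat n n \<and> invertible_mat S \<and>
            r \<in> carrier_mat 2 2 \<and> invertible_mat r \<and>
            A' = r $$ (0,0) \<cdot>\<^sub>m (transpose_mat S * A * S) + r $$ (0,1) \<cdot>\<^sub>m (transpose_mat S * B * S) \<and>
            B' = r $$ (1,0) \<cdot>\<^sub>m (transpose_mat S * A * S) + r $$ (1,1) \<cdot>\<^sub>m (transpose_mat S * B * S))"

end

theory Submission
  imports Defs
begin


definition rst :: "nat \<Rightarrow> 'a vec \<Rightarrow> 'a vec" where "rst n u = vec n (\<lambda>i. u $ (i+2))"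

lemma rst_carrier[simp]: "rst n u \<in> carrier_vec n" and dim_rst[simp]: "dim_vec (rst n u) = n"
  and index_rst[simp]: "i < n \<Longrightarrow> rst n u $ i = u $ (i+2)"
  by (auto simp: rst_def)

lemma sum_split2: "(\<Sum>i<2+(n::nat). f i) = f 0 + f 1 + (\<Sum>i<n. f (i+2))"
proof -
  have "(\<Sum>i<Suc (Suc n). f i) = f 0 + f 1 + (\<Sum>i<n. f (Suc (Suc i)))"
    by (simp only: sum.lessThan_Suc_shift add.assoc) simp
  then show ?thesis by (simp add: numeral_2_eq_2)
qed

lemma mat_vec_idx: "M \<in> carrier_mat m n \<Longrightarrow> y \<in> carrier_vec n \<Longrightarrow> i < m \<Longrightarrow> (M *\<^sub>v y) $ i = (\<Sum>j<n. M $$ (i,j) * y $ j)"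
  by (auto simp: scalar_prod_def atLeast0LessThan row_def)

lemma SF: "x \<in> carrier_vec n \<Longrightarrow> y \<in> carrier_vec n \<Longrightarrow> M \<in> carrier_mat n n \<Longrightarrow>
   x \<bullet> (M *\<^sub>v y) = (\<Sum>i<n. \<Sum>j<n. x$i * M$$(i,j) * y$j)"
  by (auto simp: scalar_prod_def atLeast0LessThan mat_vec_idx sum_distrib_left mult.assoc intro!: sum.cong)

lemma blk_carrier[simp]: "A \<in> carrier_mat n n \<Longrightarrow> blk n A \<in> carrier_mat (2+n) (2+n)"
  by (auto simp: blk_def)

lemma blk_index: "A \<in> carrier_mat n n \<Longrightarrow> i < 2+n \<Longrightarrow> j < 2+n \<Longrightarrow>
   blk n A $$ (i,j) = (if i < 2 \<or> j < 2 then 0 else A $$ (i-2, j-2))"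
  by (auto simp: blk_def)

lemma L_blk: assumes "u \<in> carrier_vec (2+n)" "v \<in> carrier_vec (2+n)" "A \<in> carrier_mat n n"
  shows "u \<bullet> (blk n A *\<^sub>v v) = rst n u \<bullet> (A *\<^sub>v rst n v)"
proof -
  have "u \<bullet> (blk n A *\<^sub>v v) = (\<Sum>i<2+n. \<Sum>j<2+n. u$i * blk n A$$(i,j) * v$j)"
    by (rule SF[OF assms(1,2) blk_carrier[OF assms(3)]])
  also have "\<dots> = (\<Sum>i<n. \<Sum>j<n. u$(i+2) * A$$(i,j) * v$(j+2))"
    by (simp only: sum_split2) (simp add: blk_index[OF assms(3)])
  also have "\<dots> = rst n u \<bullet> (A *\<^sub>v rst n v)"
    using assms by (subst SF) auto
  finally show ?thesis .
qed

lemma mAB_carrier[simp]: "mult_AB n A B u v \<in> carrier_vec (2+n)"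
  and mAB_dim[simp]: "dim_vec (mult_AB n A B u v) = 2+n"
  by (auto simp: mult_AB_def)

lemma mAB_0: "u \<in> carrier_vec (2+n) \<Longrightarrow> v \<in> carrier_vec (2+n) \<Longrightarrow> A \<in> carrier_mat n n \<Longrightarrow>
   mult_AB n A B u v $ 0 = rst n u \<bullet> (A *\<^sub>v rst n v)"
  by (simp add: mult_AB_def L_blk)

lemma mAB_1: "u \<in> carrier_vec (2+n) \<Longrightarrow> v \<in> carrier_vec (2+n) \<Longrightarrow> B \<in> carrier_mat n n \<Longrightarrow>
   mult_AB n A B u v $ 1 = rst n u \<bullet> (B *\<^sub>v rst n v)"
  by (simp add: mult_AB_def L_blk)

lemma mAB_hi: "2 \<le> k \<Longrightarrow> k < 2+n \<Longrightarrow> mult_AB n A B u v $ k = 0"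
  by (simp add: mult_AB_def)

lemma rst_mAB[simp]: "rst n (mult_AB n A B u v) = 0\<^sub>v n"
  by (auto simp: mAB_hi)

lemma mat_eq_bil: fixes M N :: "'a::comm_ring_1 mat" assumes "M \<in> carrier_mat n n" "N \<in> carrier_mat n n"
  and "\<And>x y. x \<in> carrier_vec n \<Longrightarrow> y \<in> carrier_vec n \<Longrightarrow> x \<bullet> (M *\<^sub>v y) = x \<bullet> (N *\<^sub>v y)"
  shows "M = N"
proof (rule eq_matI)
  fix i j assume ij: "i < dim_row N" "j < dim_col N"
  have e: "unit_vec n i \<bullet> (K *\<^sub>v unit_vec n j) = K $$ (i,j)" if "K \<in> carrier_mat n n" for K :: "'a mat"
    using that ij assms(2) by simp
  show "M $$ (i,j) = N $$ (i,j)"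
    using e[OF assms(1)] e[OF assms(2)] assms(3)[of "unit_vec n i" "unit_vec n j"] by simp
qed (use assms in auto)

lemma tr_sp: fixes S :: "'a::comm_ring_1 mat" assumes "S \<in> carrier_mat n n" "x \<in> carrier_vec n" "z \<in> carrier_vec n"
  shows "x \<bullet> (transpose_mat S *\<^sub>v z) = (S *\<^sub>v x) \<bullet> z"
proof -
  have "x \<bullet> (transpose_mat S *\<^sub>v z) = (\<Sum>i<n. x$i * (\<Sum>j<n. S$$(j,i) * z$j))"
    using assms by (auto simp: scalar_prod_def atLeast0LessThan mat_vec_idx[of _ n n] intro!: sum.cong)
  also have "\<dots> = (\<Sum>i<n. \<Sum>j<n. S$$(j,i) * x$i * z$j)"
    by (auto simp: sum_distrib_left mult_ac intro!: sum.cong)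
  also have "\<dots> = (\<Sum>j<n. \<Sum>i<n. S$$(j,i) * x$i * z$j)"
    by (rule sum.swap)
  also have "\<dots> = (\<Sum>j<n. (\<Sum>i<n. S$$(j,i) * x$i) * z$j)"
    by (simp add: sum_distrib_right)
  also have "\<dots> = (S *\<^sub>v x) \<bullet> z"
    using assms by (auto simp: scalar_prod_def atLeast0LessThan mat_vec_idx[of _ n n] intro!: sum.cong)
  finally show ?thesis .
qed

lemma congr_sp: fixes S :: "'a::comm_ring_1 mat" assumes "S \<in> carrier_mat n n" "M \<in> carrier_mat n n" "x \<in> carrier_vec n" "y \<in> carrier_vec n"
  shows "(S *\<^sub>v x) \<bullet> (M *\<^sub>v (S *\<^sub>v y)) = x \<bullet> ((transpose_mat S * M * S) *\<^sub>v y)"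
proof -
  have "(transpose_mat S * M * S) *\<^sub>v y = transpose_mat S *\<^sub>v (M *\<^sub>v (S *\<^sub>v y))"
    using assms by (subst assoc_mult_mat_vec[of _ n n _ n]) (auto simp: assoc_mult_mat_vec[of _ n n _ n])
  then show ?thesis using assms by (simp add: tr_sp)
qed

lemma lin_sp: fixes M :: "'a::comm_ring_1 mat" assumes "M \<in> carrier_mat n n" "N \<in> carrier_mat n n" "x \<in> carrier_vec n" "y \<in> carrier_vec n"
  shows "x \<bullet> ((a \<cdot>\<^sub>m M + b \<cdot>\<^sub>m N) *\<^sub>v y) = a * (x \<bullet> (M *\<^sub>v y)) + b * (x \<bullet> (N *\<^sub>v y))"
  using assms by (simp add: SF sum_distrib_left sum.distrib[symmetric]) (auto simp: algebra_simps intro!: sum.cong)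

lemma indep_ge2: assumes "A \<in> carrier_mat n n" "B \<in> carrier_mat n n" "lin_indep_pair n A B"
  shows "n \<ge> 2"
proof (rule ccontr)
  assume "\<not> n \<ge> 2"
  then have "n = 0 \<or> n = 1" by auto
  then show False
  proof
    assume n: "n = 0"
    have "1 \<cdot>\<^sub>m A + 0 \<cdot>\<^sub>m B = 0\<^sub>m n n" using assms n by (intro eq_matI) auto
    then show False using assms(3) unfolding lin_indep_pair_def by fastforce
  next
    assume n: "n = 1"
    have "B$$(0,0) \<cdot>\<^sub>m A + (- A$$(0,0)) \<cdot>\<^sub>m B = 0\<^sub>m n n" using assms n by (intro eq_matI) auto
    then have z: "B$$(0,0) = 0" "A$$(0,0) = 0" using assms(3) unfolding lin_indep_pair_def by fastforce+
    have "1 \<cdot>\<^sub>m A + 0 \<cdot>\<^sub>m B = 0\<^sub>m n n" using assms n z by (intro eq_matI) auto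
    then show False using assms(3) unfolding lin_indep_pair_def by fastforce
  qed
qed

lemma indep_pick: assumes "A \<in> carrier_mat n n" "B \<in> carrier_mat n n" "lin_indep_pair n A B"
  shows "\<exists>i j k l. i<n \<and> j<n \<and> k<n \<and> l<n \<and> A$$(i,j) * B$$(k,l) - B$$(i,j) * A$$(k,l) \<noteq> 0"
proof (rule ccontr)
  assume H: "\<not> ?thesis"
  have "\<exists>k l. k<n \<and> l<n \<and> (A$$(k,l) \<noteq> 0 \<or> B$$(k,l) \<noteq> 0)"
  proof (rule ccontr)
    assume "\<not> ?thesis"
    then have "1 \<cdot>\<^sub>m A + 0 \<cdot>\<^sub>m B = 0\<^sub>m n n" using assms by (intro eq_matI) auto
    then show False using assms(3) unfolding lin_indep_pair_def by fastforce
  qed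
  then obtain k l where kl: "k<n" "l<n" "A$$(k,l) \<noteq> 0 \<or> B$$(k,l) \<noteq> 0" by blast
  have "B$$(k,l) \<cdot>\<^sub>m A + (- A$$(k,l)) \<cdot>\<^sub>m B = 0\<^sub>m n n"
  proof (rule eq_matI)
    fix i j assume ij: "i < dim_row (0\<^sub>m n n :: 'a mat)" "j < dim_col (0\<^sub>m n n :: 'a mat)"
    then have "A$$(i,j) * B$$(k,l) - B$$(i,j) * A$$(k,l) = 0" using H kl by auto
    then show "(B$$(k,l) \<cdot>\<^sub>m A + (- A$$(k,l)) \<cdot>\<^sub>m B) $$ (i,j) = 0\<^sub>m n n $$ (i,j)"
      using ij assms by (auto simp: algebra_simps)
  qed (use assms in auto)
  then show False using assms(3) kl unfolding lin_indep_pair_def by fastforce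
qed



definition lin_iso :: "('a::field \<Rightarrow> 'r::ab_group_add \<Rightarrow> 'r) \<Rightarrow> nat \<Rightarrow> ('r \<Rightarrow> 'a vec) \<Rightarrow> bool" where
  "lin_iso sc m \<phi> \<longleftrightarrow> bij_betw \<phi> UNIV (carrier_vec m) \<and> (\<forall>x y. \<phi> (x + y) = \<phi> x + \<phi> y) \<and>
     (\<forall>c x. \<phi> (sc c x) = c \<cdot>\<^sub>v \<phi> x)"

lemma alg_iso_to_iff: "alg_iso_to sc mul m M \<longleftrightarrow> (\<exists>\<phi>. lin_iso sc m \<phi> \<and> (\<forall>x y. \<phi> (mul x y) = M (\<phi> x) (\<phi> y)))"
  unfolding alg_iso_to_def lin_iso_def by blast

locale sqalg = finite_dimensional_vector_space sc Bs
  for sc :: "'a::field \<Rightarrow> 'r::ab_group_add \<Rightarrow> 'r" and Bs :: "'r set" +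
  fixes mul :: "'r \<Rightarrow> 'r \<Rightarrow> 'r"
  assumes addl: "mul (x + y) z = mul x z + mul y z"
    and addr: "mul x (y + z) = mul x y + mul x z"
    and scl: "mul (sc c x) y = sc c (mul x y)"
    and scr: "mul x (sc c y) = sc c (mul x y)"
    and assoc: "mul (mul x y) z = mul x (mul y z)"
    and cube: "alg_cube sc mul = {0}"
begin

abbreviation "W \<equiv> span {mul u v | u v. True}"

lemma mul0l[simp]: "mul 0 y = 0" using addl[of 0 0 y] by simp
lemma mul0r[simp]: "mul y 0 = 0" using addr[of y 0 0] by simp
lemma mul_suml: "mul (sum f F) y = (\<Sum>x\<in>F. mul (f x) y)"
  by (induction F rule: infinite_finite_induct) (auto simp: addl)
lemma mul_sumr: "mul y (sum f F) = (\<Sum>x\<in>F. mul y (f x))"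
  by (induction F rule: infinite_finite_induct) (auto simp: addr)
lemma mul3: "mul (mul x y) z = 0"
proof -
  have "mul (mul x y) z \<in> span {mul (mul u v) w | u v w. True}" by (rule span_base) blast
  then show ?thesis using cube by (simp add: alg_cube_def)
qed
lemma mul_in_W: "mul x y \<in> W" by (rule span_base) blast
lemma mulW_l: assumes "w \<in> W" shows "mul w y = 0"
  using assms
proof (induction rule: span_induct_alt)
  case base show ?case by simp
next
  case (step c x z) then show ?case by (auto simp: addl scl mul3)
qed
lemma mulW_r: assumes "w \<in> W" shows "mul y w = 0"
  using assms
proof (induction rule: span_induct_alt)
  case base show ?case by simp
next
  case (step c x z) then show ?case by (auto simp: addr scr mul3 assoc[symmetric])
qed

end

locale coord = sqalg sc Bs mul
  for sc :: "'a::field \<Rightarrow> 'r::ab_group_add \<Rightarrow> 'r" and Bs :: "'r set" and mul +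
  fixes \<phi> :: "'r \<Rightarrow> 'a vec" and m :: nat
  assumes li: "lin_iso sc m \<phi>"
begin

lemma bij: "bij_betw \<phi> UNIV (carrier_vec m)" using li by (simp add: lin_iso_def)
lemma car[simp]: "\<phi> x \<in> carrier_vec m" using bij by (auto simp: bij_betw_def)
lemma dimv[simp]: "dim_vec (\<phi> x) = m" using car[of x] by simp
lemma padd: "\<phi> (x + y) = \<phi> x + \<phi> y" using li by (simp add: lin_iso_def)
lemma psc': "\<phi> (sc c x) = c \<cdot>\<^sub>v \<phi> x" using li by (simp add: lin_iso_def)
lemma padd_i: "i < m \<Longrightarrow> \<phi> (x + y) $ i = \<phi> x $ i + \<phi> y $ i" by (simp add: padd)
lemma psc: "i < m \<Longrightarrow> \<phi> (sc c x) $ i = c * \<phi> x $ i" by (simp add: psc')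
lemma p0: "\<phi> 0 = 0\<^sub>v m"
proof -
  have "\<phi> 0 = 0 \<cdot>\<^sub>v \<phi> 0" using psc'[of 0 0] by simp
  also have "\<dots> = 0\<^sub>v m" by (intro eq_vecI) auto
  finally show ?thesis .
qed
lemma p0_i[simp]: "i < m \<Longrightarrow> \<phi> 0 $ i = 0" by (simp add: p0)
lemma psum: "i < m \<Longrightarrow> \<phi> (sum h A0) $ i = (\<Sum>x\<in>A0. \<phi> (h x) $ i)"
  by (induction A0 rule: infinite_finite_induct) (auto simp: padd_i)
lemma inj: "\<phi> x = \<phi> y \<Longrightarrow> x = y" using bij by (auto simp: bij_betw_def inj_on_def)
lemma inv_eq: "v \<in> carrier_vec m \<Longrightarrow> \<phi> (inv_into UNIV \<phi> v) = v"
  using bij by (metis bij_betw_def f_inv_into_f)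

lemma decomp: assumes "\<And>j. j < m \<Longrightarrow> \<phi> (g j) = unit_vec m j"
  shows "x = (\<Sum>j<m. sc (\<phi> x $ j) (g j))"
proof (rule inj, rule eq_vecI)
  fix i assume "i < dim_vec (\<phi> (\<Sum>j<m. sc (\<phi> x $ j) (g j)))"
  then have i: "i < m" by simp
  have "\<phi> (\<Sum>j<m. sc (\<phi> x $ j) (g j)) $ i = (\<Sum>j<m. \<phi> x $ j * (if i = j then 1 else 0))"
    using i assms by (simp add: psum psc)
  also have "\<dots> = \<phi> x $ i" using i by (simp add: if_distrib cong: if_cong)
  finally show "\<phi> x $ i = \<phi> (\<Sum>j<m. sc (\<phi> x $ j) (g j)) $ i" by simp
qed simp

lemma gb: "j < m \<Longrightarrow> \<phi> (inv_into UNIV \<phi> (unit_vec m j)) = unit_vec m j"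
  by (simp add: inv_eq)

lemma dimUNIV: "dim UNIV = m"
proof -
  define g where "g j = inv_into UNIV \<phi> (unit_vec m j)" for j
  have g: "\<phi> (g j) = unit_vec m j" if "j < m" for j using that gb by (simp add: g_def)
  have ij: "inj_on g {..<m}"
  proof (rule inj_onI)
    fix i j assume "i \<in> {..<m}" "j \<in> {..<m}" "g i = g j"
    then have "unit_vec m i $ i = (unit_vec m j :: 'a vec) $ i" using g by (metis lessThan_iff)
    then show "i = j" using \<open>i \<in> {..<m}\<close> \<open>j \<in> {..<m}\<close> by (auto split: if_splits)
  qed
  let ?B = "g ` {..<m}"
  have "independent ?B"
    unfolding independent_explicit
  proof (intro conjI allI impI ballI)
    show "finite ?B" by simp
    fix c v assume s: "(\<Sum>v\<in>?B. sc (c v) v) = 0" and v: "v \<in> ?B"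
    then obtain k where k: "k < m" "v = g k" by auto
    have "(\<Sum>j<m. sc (c (g j)) (g j)) = 0" using s by (simp add: sum.reindex[OF ij])
    then have "\<phi> (\<Sum>j<m. sc (c (g j)) (g j)) $ k = 0" using k by simp
    then have "(\<Sum>j<m. c (g j) * (if k = j then 1 else 0)) = 0" using k g by (simp add: psum psc)
    then show "c v = 0" using k by (simp add: if_distrib cong: if_cong)
  qed
  moreover have "UNIV \<subseteq> span ?B"
  proof
    fix x :: 'r
    have "x = (\<Sum>j<m. sc (\<phi> x $ j) (g j))" by (rule decomp) (simp add: g)
    also have "\<dots> \<in> span ?B" by (intro span_sum span_scale span_base) auto
    finally show "x \<in> span ?B" .
  qed
  moreover have "card ?B = m" using ij by (simp add: card_image)
  ultimately show ?thesis by (intro dim_unique[of ?B]) auto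
qed

lemma mul_expand: assumes "\<And>j. j < m \<Longrightarrow> \<phi> (g j) = unit_vec m j" and k: "k < m"
  shows "\<phi> (mul x y) $ k = (\<Sum>i<m. \<Sum>j<m. \<phi> x $ i * \<phi> y $ j * \<phi> (mul (g i) (g j)) $ k)"
proof -
  have "mul x y = mul (\<Sum>i<m. sc (\<phi> x $ i) (g i)) (\<Sum>j<m. sc (\<phi> y $ j) (g j))"
    using decomp[OF assms(1)] by metis
  also have "\<dots> = (\<Sum>i<m. mul (sc (\<phi> x $ i) (g i)) (\<Sum>j<m. sc (\<phi> y $ j) (g j)))"
    by (rule mul_suml)
  also have "\<dots> = (\<Sum>i<m. \<Sum>j<m. mul (sc (\<phi> x $ i) (g i)) (sc (\<phi> y $ j) (g j)))"
    by (simp only: mul_sumr)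
  also have "\<dots> = (\<Sum>i<m. \<Sum>j<m. sc (\<phi> x $ i * \<phi> y $ j) (mul (g i) (g j)))"
    by (simp add: scl scr mult.commute)
  finally show ?thesis using k by (simp add: psum psc mult.assoc)
qed

end



declare add_2_eq_Suc [simp del] add_2_eq_Suc' [simp del]

lemma bil_unit: fixes K :: "'a::comm_ring_1 mat" shows "K \<in> carrier_mat n n \<Longrightarrow> i<n \<Longrightarrow> j<n \<Longrightarrow> unit_vec n i \<bullet> (K *\<^sub>v unit_vec n j) = K $$ (i,j)"
  by simp

lemma rst_unit: "j<n \<Longrightarrow> rst n (unit_vec (2+n) (j+2)) = unit_vec n j"
  by (intro eq_vecI) auto

lemma rst_unit_lo: "j<2 \<Longrightarrow> rst n (unit_vec (2+n) j) = 0\<^sub>v n"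
  by (intro eq_vecI) auto

lemma cramer: fixes a b c e p q :: "'a::field" assumes d: "a*e - b*c \<noteq> 0"
  shows "(p*e - q*c)/(a*e - b*c) * a + (q*a - p*b)/(a*e - b*c) * c = p"
    and "(p*e - q*c)/(a*e - b*c) * b + (q*a - p*b)/(a*e - b*c) * e = q"
proof -
  have e1: "(p*e - q*c)*a + (q*a - p*b)*c = p * (a*e - b*c)" by (simp add: algebra_simps)
  have e2: "(p*e - q*c)*b + (q*a - p*b)*e = q * (a*e - b*c)" by (simp add: algebra_simps)
  have "(p*e - q*c)/(a*e - b*c) * a + (q*a - p*b)/(a*e - b*c) * c
     = ((p*e - q*c)*a + (q*a - p*b)*c)/(a*e - b*c)" by (simp add: add_divide_distrib)
  also have "\<dots> = p" using d by (simp add: e1)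
  finally show "(p*e - q*c)/(a*e - b*c) * a + (q*a - p*b)/(a*e - b*c) * c = p" .
  have "(p*e - q*c)/(a*e - b*c) * b + (q*a - p*b)/(a*e - b*c) * e
     = ((p*e - q*c)*b + (q*a - p*b)*e)/(a*e - b*c)" by (simp add: add_divide_distrib)
  also have "\<dots> = q" using d by (simp add: e2)
  finally show "(p*e - q*c)/(a*e - b*c) * b + (q*a - p*b)/(a*e - b*c) * e = q" .
qed

locale isoAB = coord sc Bs mul \<phi> "2+n"
  for sc :: "'a::field \<Rightarrow> 'r::ab_group_add \<Rightarrow> 'r" and Bs mul \<phi> and n :: nat +
  fixes A B :: "'a mat"
  assumes Ac: "A \<in> carrier_mat n n" and Bc: "B \<in> carrier_mat n n"
    and mAB: "\<phi> (mul x y) = mult_AB n A B (\<phi> x) (\<phi> y)"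
begin

lemma prod0: "\<phi> (mul x y) $ 0 = rst n (\<phi> x) \<bullet> (A *\<^sub>v rst n (\<phi> y))"
  by (simp only: mAB) (rule mAB_0[OF car car Ac])
lemma prod1: "\<phi> (mul x y) $ 1 = rst n (\<phi> x) \<bullet> (B *\<^sub>v rst n (\<phi> y))"
  by (simp only: mAB) (rule mAB_1[OF car car Bc])
lemma prod_hi: "2 \<le> k \<Longrightarrow> k < 2+n \<Longrightarrow> \<phi> (mul x y) $ k = 0"
  by (simp add: mAB mAB_hi)

lemma inW_rst: assumes "w \<in> W" shows "\<forall>i<n. \<phi> w $ (i+2) = 0"
  using assms
proof (induction rule: span_induct_alt)
  case base show ?case by simp
next
  case (step c x z) then show ?case by (auto simp: padd_i psc prod_hi)
qed

lemma prod_unit0: "i<n \<Longrightarrow> j<n \<Longrightarrow>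
  \<phi> (mul (inv_into UNIV \<phi> (unit_vec (2+n) (i+2))) (inv_into UNIV \<phi> (unit_vec (2+n) (j+2)))) $ 0 = A $$ (i,j)"
  by (subst prod0) (simp add: gb rst_unit bil_unit[OF Ac])
lemma prod_unit1: "i<n \<Longrightarrow> j<n \<Longrightarrow>
  \<phi> (mul (inv_into UNIV \<phi> (unit_vec (2+n) (i+2))) (inv_into UNIV \<phi> (unit_vec (2+n) (j+2)))) $ 1 = B $$ (i,j)"
  by (subst prod1) (simp add: gb rst_unit bil_unit[OF Bc])

lemma W_char: assumes ind: "lin_indep_pair n A B" and w: "\<forall>i<n. \<phi> w $ (i+2) = 0"
  shows "w \<in> W"
proof -
  obtain i j k l where ijkl: "i<n" "j<n" "k<n" "l<n" and d: "A$$(i,j) * B$$(k,l) - B$$(i,j) * A$$(k,l) \<noteq> 0"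
    using indep_pick[OF Ac Bc ind] by blast
  define e where "e t = inv_into UNIV \<phi> (unit_vec (2+n) (t+2))" for t
  define p where "p = mul (e i) (e j)"
  define q where "q = mul (e k) (e l)"
  define d where "d = A$$(i,j) * B$$(k,l) - B$$(i,j) * A$$(k,l)"
  have dnz: "d \<noteq> 0" using d by (simp add: d_def)
  note cr = cramer[where a="A$$(i,j)" and b="B$$(i,j)" and c="A$$(k,l)" and e="B$$(k,l)", folded d_def, OF dnz]
  define w0 where "w0 = \<phi> w $ 0"
  define w1 where "w1 = \<phi> w $ 1"
  define \<alpha> where "\<alpha> = (w0 * B$$(k,l) - w1 * A$$(k,l)) / d"
  define \<beta> where "\<beta> = (w1 * A$$(i,j) - w0 * B$$(i,j)) / d"
  have pq: "\<phi> p $ 0 = A$$(i,j)" "\<phi> p $ 1 = B$$(i,j)" "\<phi> q $ 0 = A$$(k,l)" "\<phi> q $ 1 = B$$(k,l)"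
    using prod_unit0[OF ijkl(1,2)] prod_unit1[OF ijkl(1,2)] prod_unit0[OF ijkl(3,4)] prod_unit1[OF ijkl(3,4)]
    unfolding p_def q_def e_def by auto
  have "\<phi> w = \<phi> (sc \<alpha> p + sc \<beta> q)"
  proof (rule eq_vecI)
    fix t assume "t < dim_vec (\<phi> (sc \<alpha> p + sc \<beta> q))"
    then have t: "t < 2+n" by simp
    show "\<phi> w $ t = \<phi> (sc \<alpha> p + sc \<beta> q) $ t"
    proof (cases "t < 2")
      case True
      then have "t = 0 \<or> t = 1" by auto
      then show ?thesis
      proof
        assume t0: "t = 0"
        have "\<alpha> * A$$(i,j) + \<beta> * A$$(k,l) = w0"
          unfolding \<alpha>_def \<beta>_def using cr(1)[where p=w0 and q=w1] by simp
        then show ?thesis using t0 by (simp add: padd_i psc pq w0_def)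
      next
        assume t1: "t = 1"
        have "\<alpha> * B$$(i,j) + \<beta> * B$$(k,l) = w1"
          unfolding \<alpha>_def \<beta>_def using cr(2)[where p=w0 and q=w1] by simp
        then show ?thesis using t1 pq by (simp add: padd_i psc w1_def)
      qed
    next
      case False
      then obtain s where s: "t = s + 2" "s < n" using t by (metis add.commute le_add_diff_inverse not_less add_less_cancel_left)
      then show ?thesis using w t by (simp add: padd_i psc p_def q_def prod_hi)
    qed
  qed simp
  then have "w = sc \<alpha> p + sc \<beta> q" by (rule inj)
  also have "\<dots> \<in> W" unfolding p_def q_def by (intro span_add span_scale mul_in_W)
  finally show ?thesis .
qed

end



definition ext0 :: "nat \<Rightarrow> 'a::zero vec \<Rightarrow> 'a vec" where
  "ext0 n x = vec (2+n) (\<lambda>t. if t<2 then 0 else x $ (t-2))"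
definition ext2 :: "nat \<Rightarrow> 'a::zero vec \<Rightarrow> 'a vec" where
  "ext2 n z = vec (2+n) (\<lambda>t. if t<2 then z $ t else 0)"

lemma ext0_carrier[simp]: "ext0 n x \<in> carrier_vec (2+n)" by (simp add: ext0_def)
lemma ext2_carrier[simp]: "ext2 n x \<in> carrier_vec (2+n)" by (simp add: ext2_def)
lemma rst_ext0: "x \<in> carrier_vec n \<Longrightarrow> rst n (ext0 n x) = x"
  by (intro eq_vecI) (auto simp: ext0_def)
lemma rst_ext2: "rst n (ext2 n x) = 0\<^sub>v n"
  by (intro eq_vecI) (auto simp: ext2_def)
lemma ext2_lo: "a < 2 \<Longrightarrow> ext2 n z $ a = z $ a" by (simp add: ext2_def)

lemma mat_one_bil: fixes M :: "'a::comm_ring_1 mat"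
  assumes "M \<in> carrier_mat n n" "\<And>y. y \<in> carrier_vec n \<Longrightarrow> M *\<^sub>v y = y"
  shows "M = 1\<^sub>m n"
  by (rule mat_eq_bil[OF assms(1) one_carrier_mat]) (simp add: assms(2))

lemma mv2: fixes R :: "'a::comm_ring_1 mat"
  assumes "R \<in> carrier_mat 2 2" "w \<in> carrier_vec 2" "a < 2"
  shows "(R *\<^sub>v w) $ a = R$$(a,0) * w$0 + R$$(a,1) * w$1"
  by (subst mat_vec_idx[OF assms(1,2,3)]) (simp add: numeral_2_eq_2)

lemma mm2: fixes R :: "'a::comm_ring_1 mat"
  assumes "R \<in> carrier_mat 2 2" "R' \<in> carrier_mat 2 2" "a < 2" "c < 2"
  shows "(R * R') $$ (a,c) = R$$(a,0) * R'$$(0,c) + R$$(a,1) * R'$$(1,c)"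
  using assms by (simp add: scalar_prod_def numeral_2_eq_2 atLeast0LessThan)

lemma transfer:
  assumes P: "isoAB sc Bs mul \<phi>0 n A B" and Q: "isoAB sc Bs mul \<phi> n A' B'"
    and indA: "lin_indep_pair n A B"
  defines "S \<equiv> mat n n (\<lambda>(i,j). \<phi> (inv_into UNIV \<phi>0 (unit_vec (2+n) (j+2))) $ (i+2))"
    and "r \<equiv> mat 2 2 (\<lambda>(a,b). \<phi> (inv_into UNIV \<phi>0 (unit_vec (2+n) b)) $ a)"
  shows "\<And>x. rst n (\<phi> x) = S *\<^sub>v rst n (\<phi>0 x)"
    and "\<And>x a. \<forall>i<n. \<phi>0 x $ (i+2) = 0 \<Longrightarrow> a < 2 \<Longrightarrow> \<phi> x $ a = r$$(a,0) * \<phi>0 x $ 0 + r$$(a,1) * \<phi>0 x $ 1"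
    and "transpose_mat S * A' * S = r$$(0,0) \<cdot>\<^sub>m A + r$$(0,1) \<cdot>\<^sub>m B"
    and "transpose_mat S * B' * S = r$$(1,0) \<cdot>\<^sub>m A + r$$(1,1) \<cdot>\<^sub>m B"
proof -
  interpret P: isoAB sc Bs mul \<phi>0 n A B by fact
  interpret Q: isoAB sc Bs mul \<phi> n A' B' by fact
  have Sc: "S \<in> carrier_mat n n" and rc: "r \<in> carrier_mat 2 2" by (simp_all add: S_def r_def)
  define g where "g t = inv_into UNIV \<phi>0 (unit_vec (2+n) t)" for t
  have g: "\<phi>0 (g t) = unit_vec (2+n) t" if "t < 2+n" for t using that by (simp add: g_def P.gb)
  have gW: "g t \<in> P.W" if "t < 2" for t
    by (rule P.W_char[OF indA]) (use that g in auto)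
  have gz: "\<phi> (g t) $ (i+2) = 0" if "t < 2" "i < n" for t i
    using Q.inW_rst[OF gW[OF that(1)]] that(2) by blast
  have dec: "x = (\<Sum>t<2+n. sc (\<phi>0 x $ t) (g t))" for x by (rule P.decomp) (simp add: g)
  have phx: "\<phi> x $ k = (\<Sum>t<2+n. \<phi>0 x $ t * \<phi> (g t) $ k)" if "k < 2+n" for x k
  proof -
    have "\<phi> x $ k = \<phi> (\<Sum>t<2+n. sc (\<phi>0 x $ t) (g t)) $ k"
      by (rule arg_cong[where f="\<lambda>z. \<phi> z $ k"]) (rule dec)
    also have "\<dots> = (\<Sum>t<2+n. \<phi>0 x $ t * \<phi> (g t) $ k)" using that by (simp add: Q.psum Q.psc)
    finally show ?thesis .
  qed
  show 1: "rst n (\<phi> x) = S *\<^sub>v rst n (\<phi>0 x)" for x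
  proof (rule eq_vecI)
    fix i assume "i < dim_vec (S *\<^sub>v rst n (\<phi>0 x))" then have i: "i<n" by (simp add: S_def)
    have "\<phi> x $ (i+2) = (\<Sum>t<2+n. \<phi>0 x $ t * \<phi> (g t) $ (i+2))" using i by (intro phx) simp
    also have "\<dots> = (\<Sum>j<n. \<phi>0 x $ (j+2) * \<phi> (g (j+2)) $ (i+2))"
      using gz[of 0 i] gz[of 1 i] i by (simp add: sum_split2)
    also have "\<dots> = (S *\<^sub>v rst n (\<phi>0 x)) $ i"
      using i by (subst mat_vec_idx[OF Sc rst_carrier i]) (auto simp: S_def g_def mult.commute intro!: sum.cong)
    finally show "rst n (\<phi> x) $ i = (S *\<^sub>v rst n (\<phi>0 x)) $ i" using i by simp
  qed (simp add: S_def)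
  show 2: "\<phi> x $ a = r$$(a,0) * \<phi>0 x $ 0 + r$$(a,1) * \<phi>0 x $ 1"
    if hx: "\<forall>i<n. \<phi>0 x $ (i+2) = 0" and a: "a < 2" for x a
  proof -
    have "\<phi> x $ a = (\<Sum>t<2+n. \<phi>0 x $ t * \<phi> (g t) $ a)" using a by (intro phx) simp
    also have "\<dots> = \<phi>0 x $ 0 * \<phi> (g 0) $ a + \<phi>0 x $ 1 * \<phi> (g 1) $ a"
      using hx by (simp add: sum_split2)
    also have "\<dots> = r$$(a,0) * \<phi>0 x $ 0 + r$$(a,1) * \<phi>0 x $ 1"
      using a by (simp add: r_def g_def mult.commute)
    finally show ?thesis .
  qed
  have key: "x' \<bullet> ((transpose_mat S * A'' * S) *\<^sub>v y') = r$$(a,0) * (x' \<bullet> (A *\<^sub>v y')) + r$$(a,1) * (x' \<bullet> (B *\<^sub>v y'))"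
    if xy: "x' \<in> carrier_vec n" "y' \<in> carrier_vec n" and a: "a < 2"
      and A'': "A'' \<in> carrier_mat n n"
      and pr: "\<And>u v. \<phi> (mul u v) $ a = rst n (\<phi> u) \<bullet> (A'' *\<^sub>v rst n (\<phi> v))" for x' y' a A''
  proof -
    define x where "x = inv_into UNIV \<phi>0 (ext0 n x')"
    define y where "y = inv_into UNIV \<phi>0 (ext0 n y')"
    have rx: "rst n (\<phi>0 x) = x'" using xy by (simp add: x_def P.inv_eq rst_ext0)
    have ry: "rst n (\<phi>0 y) = y'" using xy by (simp add: y_def P.inv_eq rst_ext0)
    have "x' \<bullet> ((transpose_mat S * A'' * S) *\<^sub>v y') = (S *\<^sub>v x') \<bullet> (A'' *\<^sub>v (S *\<^sub>v y'))"
      by (rule congr_sp[OF Sc A'' xy, symmetric])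
    also have "\<dots> = rst n (\<phi> x) \<bullet> (A'' *\<^sub>v rst n (\<phi> y))" using 1 rx ry by simp
    also have "\<dots> = \<phi> (mul x y) $ a" by (rule pr[symmetric])
    also have "\<dots> = r$$(a,0) * \<phi>0 (mul x y) $ 0 + r$$(a,1) * \<phi>0 (mul x y) $ 1"
      by (rule 2) (auto simp: P.prod_hi a)
    also have "\<dots> = r$$(a,0) * (x' \<bullet> (A *\<^sub>v y')) + r$$(a,1) * (x' \<bullet> (B *\<^sub>v y'))"
      by (simp only: P.prod0 P.prod1 rx ry)
    finally show ?thesis .
  qed
  show "transpose_mat S * A' * S = r$$(0,0) \<cdot>\<^sub>m A + r$$(0,1) \<cdot>\<^sub>m B"
  proof (rule mat_eq_bil)
    fix x' y' :: "'a vec" assume xy: "x' \<in> carrier_vec n" "y' \<in> carrier_vec n"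
    show "x' \<bullet> ((transpose_mat S * A' * S) *\<^sub>v y') = x' \<bullet> ((r$$(0,0) \<cdot>\<^sub>m A + r$$(0,1) \<cdot>\<^sub>m B) *\<^sub>v y')"
      by (subst lin_sp[OF P.Ac P.Bc xy]) (rule key[OF xy _ Q.Ac Q.prod0], simp)
  qed (use Sc Q.Ac P.Ac P.Bc in auto)
  show "transpose_mat S * B' * S = r$$(1,0) \<cdot>\<^sub>m A + r$$(1,1) \<cdot>\<^sub>m B"
  proof (rule mat_eq_bil)
    fix x' y' :: "'a vec" assume xy: "x' \<in> carrier_vec n" "y' \<in> carrier_vec n"
    show "x' \<bullet> ((transpose_mat S * B' * S) *\<^sub>v y') = x' \<bullet> ((r$$(1,0) \<cdot>\<^sub>m A + r$$(1,1) \<cdot>\<^sub>m B) *\<^sub>v y')"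
      by (subst lin_sp[OF P.Ac P.Bc xy]) (rule key[OF xy _ Q.Bc Q.prod1], simp)
  qed (use Sc Q.Bc P.Ac P.Bc in auto)
qed



lemma transfer_inv:
  assumes P: "isoAB sc Bs mul \<phi>0 n A B" and Q: "isoAB sc Bs mul \<phi> n A' B'"
    and indA: "lin_indep_pair n A B" and indA': "lin_indep_pair n A' B'"
  defines "S \<equiv> mat n n (\<lambda>(i,j). \<phi> (inv_into UNIV \<phi>0 (unit_vec (2+n) (j+2))) $ (i+2))"
    and "r \<equiv> mat 2 2 (\<lambda>(a,b). \<phi> (inv_into UNIV \<phi>0 (unit_vec (2+n) b)) $ a)"
    and "T \<equiv> mat n n (\<lambda>(i,j). \<phi>0 (inv_into UNIV \<phi> (unit_vec (2+n) (j+2))) $ (i+2))"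
    and "r' \<equiv> mat 2 2 (\<lambda>(a,b). \<phi>0 (inv_into UNIV \<phi> (unit_vec (2+n) b)) $ a)"
  shows "S * T = 1\<^sub>m n" "r * r' = 1\<^sub>m 2"
proof -
  interpret P: isoAB sc Bs mul \<phi>0 n A B by fact
  interpret Q: isoAB sc Bs mul \<phi> n A' B' by fact
  note t1 = transfer[OF P Q indA, folded S_def r_def]
  note t2 = transfer[OF Q P indA', folded T_def r'_def]
  have Sc: "S \<in> carrier_mat n n" and rc: "r \<in> carrier_mat 2 2" by (simp_all add: S_def r_def)
  have Tc: "T \<in> carrier_mat n n" and r'c: "r' \<in> carrier_mat 2 2" by (simp_all add: T_def r'_def)
  show "S * T = 1\<^sub>m n"
  proof (rule mat_one_bil)
    show "S * T \<in> carrier_mat n n" using Sc Tc by simp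
    fix y :: "'a vec" assume y: "y \<in> carrier_vec n"
    define x where "x = inv_into UNIV \<phi> (ext0 n y)"
    have rx: "rst n (\<phi> x) = y" using y by (simp add: x_def Q.inv_eq rst_ext0)
    have "(S * T) *\<^sub>v y = S *\<^sub>v (T *\<^sub>v y)" using Sc Tc y by (rule assoc_mult_mat_vec)
    also have "\<dots> = S *\<^sub>v (T *\<^sub>v rst n (\<phi> x))" by (simp add: rx)
    also have "\<dots> = S *\<^sub>v rst n (\<phi>0 x)" by (simp add: t2(1))
    also have "\<dots> = rst n (\<phi> x)" by (simp add: t1(1))
    finally show "(S * T) *\<^sub>v y = y" using rx by simp
  qed
  show "r * r' = 1\<^sub>m 2"
  proof (rule mat_one_bil)
    show "r * r' \<in> carrier_mat 2 2" using rc r'c by simp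
    fix z :: "'a vec" assume z: "z \<in> carrier_vec 2"
    define x where "x = inv_into UNIV \<phi> (ext2 n z)"
    have px: "\<phi> x = ext2 n z" by (simp add: x_def Q.inv_eq)
    have hx: "\<forall>i<n. \<phi> x $ (i+2) = 0" by (simp add: px ext2_def)
    have h0: "\<forall>i<n. \<phi>0 x $ (i+2) = 0" using P.inW_rst Q.W_char[OF indA' hx] by blast
    show "(r * r') *\<^sub>v z = z"
    proof (rule eq_vecI)
      fix a assume "a < dim_vec z" then have a: "a < 2" using z by simp
      have e1: "z$a = r$$(a,0) * \<phi>0 x$0 + r$$(a,1) * \<phi>0 x$1"
        using t1(2)[OF h0 a] px ext2_lo[OF a, of n z] by simp
      have e2: "\<phi>0 x $ b = r'$$(b,0) * z$0 + r'$$(b,1) * z$1" if b: "b < 2" for b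
        using t2(2)[OF hx b] px by (simp add: ext2_def)
      have "((r * r') *\<^sub>v z) $ a = (r*r')$$(a,0) * z$0 + (r*r')$$(a,1) * z$1"
        by (rule mv2) (use rc r'c z a in auto)
      also have "\<dots> = (r$$(a,0) * r'$$(0,0) + r$$(a,1) * r'$$(1,0)) * z$0
                     + (r$$(a,0) * r'$$(0,1) + r$$(a,1) * r'$$(1,1)) * z$1"
        using mm2[OF rc r'c a, of 0] mm2[OF rc r'c a, of 1] by simp
      also have "\<dots> = z $ a" using e1 e2[of 0] e2[of 1] by (simp add: algebra_simps)
      finally show "((r * r') *\<^sub>v z) $ a = z $ a" .
    qed (use rc z in simp)
  qed
qed

lemma two_iso:
  assumes P: "isoAB sc Bs mul \<phi>0 n A B" and Q: "isoAB sc Bs mul \<phi> n A' B'"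
    and indA: "lin_indep_pair n A B" and indA': "lin_indep_pair n A' B'"
  shows "pair_equiv n A B A' B'"
proof -
  interpret P: isoAB sc Bs mul \<phi>0 n A B by fact
  interpret Q: isoAB sc Bs mul \<phi> n A' B' by fact
  define S where "S \<equiv> mat n n (\<lambda>(i,j). \<phi> (inv_into UNIV \<phi>0 (unit_vec (2+n) (j+2))) $ (i+2))"
  define r where "r \<equiv> mat 2 2 (\<lambda>(a,b). \<phi> (inv_into UNIV \<phi>0 (unit_vec (2+n) b)) $ a)"
  define T where "T \<equiv> mat n n (\<lambda>(i,j). \<phi>0 (inv_into UNIV \<phi> (unit_vec (2+n) (j+2))) $ (i+2))"
  define r' where "r' \<equiv> mat 2 2 (\<lambda>(a,b). \<phi>0 (inv_into UNIV \<phi> (unit_vec (2+n) b)) $ a)"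
  note t1 = transfer[OF P Q indA, folded S_def r_def]
  note i1 = transfer_inv[OF P Q indA indA', folded S_def T_def r_def r'_def]
  note i2 = transfer_inv[OF Q P indA' indA, folded S_def T_def r_def r'_def]
  have Sc: "S \<in> carrier_mat n n" and rc: "r \<in> carrier_mat 2 2" by (simp_all add: S_def r_def)
  have Tc: "T \<in> carrier_mat n n" and r'c: "r' \<in> carrier_mat 2 2" by (simp_all add: T_def r'_def)
  have invT: "invertible_mat T" unfolding invertible_mat_def inverts_mat_def
    using Tc Sc i1 i2 by auto
  have invr: "invertible_mat r" unfolding invertible_mat_def inverts_mat_def
    using rc r'c i1 i2 by auto
  have STx: "S *\<^sub>v (T *\<^sub>v x) = x" if "x \<in> carrier_vec n" for x
  proof -
    have "S *\<^sub>v (T *\<^sub>v x) = (S * T) *\<^sub>v x" using Sc Tc that by (rule assoc_mult_mat_vec[symmetric])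
    then show ?thesis using i1(1) that by simp
  qed
  have eq: "M' = r$$(a,0) \<cdot>\<^sub>m (transpose_mat T * A * T) + r$$(a,1) \<cdot>\<^sub>m (transpose_mat T * B * T)"
    if M': "M' \<in> carrier_mat n n" and tr: "transpose_mat S * M' * S = r$$(a,0) \<cdot>\<^sub>m A + r$$(a,1) \<cdot>\<^sub>m B" for M' a
  proof (rule mat_eq_bil)
    fix x y :: "'a vec" assume xy: "x \<in> carrier_vec n" "y \<in> carrier_vec n"
    have Tx: "T *\<^sub>v x \<in> carrier_vec n" "T *\<^sub>v y \<in> carrier_vec n" using Tc xy by auto
    have "x \<bullet> (M' *\<^sub>v y) = (S *\<^sub>v (T *\<^sub>v x)) \<bullet> (M' *\<^sub>v (S *\<^sub>v (T *\<^sub>v y)))" using STx xy by simp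
    also have "\<dots> = (T *\<^sub>v x) \<bullet> ((transpose_mat S * M' * S) *\<^sub>v (T *\<^sub>v y))"
      by (rule congr_sp[OF Sc M' Tx])
    also have "\<dots> = (T *\<^sub>v x) \<bullet> ((r$$(a,0) \<cdot>\<^sub>m A + r$$(a,1) \<cdot>\<^sub>m B) *\<^sub>v (T *\<^sub>v y))" by (simp only: tr)
    also have "\<dots> = r$$(a,0) * ((T *\<^sub>v x) \<bullet> (A *\<^sub>v (T *\<^sub>v y))) + r$$(a,1) * ((T *\<^sub>v x) \<bullet> (B *\<^sub>v (T *\<^sub>v y)))"
      by (rule lin_sp[OF P.Ac P.Bc Tx])
    also have "\<dots> = r$$(a,0) * (x \<bullet> ((transpose_mat T * A * T) *\<^sub>v y)) + r$$(a,1) * (x \<bullet> ((transpose_mat T * B * T) *\<^sub>v y))"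
      by (simp only: congr_sp[OF Tc P.Ac xy] congr_sp[OF Tc P.Bc xy])
    also have "\<dots> = x \<bullet> ((r$$(a,0) \<cdot>\<^sub>m (transpose_mat T * A * T) + r$$(a,1) \<cdot>\<^sub>m (transpose_mat T * B * T)) *\<^sub>v y)"
      by (rule lin_sp[symmetric]) (use Tc P.Ac P.Bc xy in auto)
    finally show "x \<bullet> (M' *\<^sub>v y) = x \<bullet> ((r$$(a,0) \<cdot>\<^sub>m (transpose_mat T * A * T) + r$$(a,1) \<cdot>\<^sub>m (transpose_mat T * B * T)) *\<^sub>v y)" .
  qed (use M' Tc P.Ac P.Bc in auto)
  have eqA: "A' = r$$(0,0) \<cdot>\<^sub>m (transpose_mat T * A * T) + r$$(0,1) \<cdot>\<^sub>m (transpose_mat T * B * T)"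
    by (rule eq[OF Q.Ac t1(3)])
  have eqB: "B' = r$$(1,0) \<cdot>\<^sub>m (transpose_mat T * A * T) + r$$(1,1) \<cdot>\<^sub>m (transpose_mat T * B * T)"
    by (rule eq[OF Q.Bc t1(4)])
  show ?thesis unfolding pair_equiv_def using Tc invT rc invr eqA eqB by blast
qed



definition fst2 :: "'a vec \<Rightarrow> 'a vec" where "fst2 u = vec 2 (\<lambda>i. u $ i)"
definition bm :: "nat \<Rightarrow> 'a::comm_ring_1 mat \<Rightarrow> 'a mat \<Rightarrow> 'a vec \<Rightarrow> 'a vec" where
  "bm n R T u = vec (2+n) (\<lambda>k. if k < 2 then (R *\<^sub>v fst2 u) $ k else (T *\<^sub>v rst n u) $ (k-2))"

lemma fst2_carrier[simp]: "fst2 u \<in> carrier_vec 2" by (simp add: fst2_def)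
lemma bm_carrier[simp]: "bm n R T u \<in> carrier_vec (2+n)" by (simp add: bm_def)
lemma dim_bm[simp]: "dim_vec (bm n R T u) = 2+n" by (simp add: bm_def)
lemma bm_lo: "k < 2 \<Longrightarrow> bm n R T u $ k = (R *\<^sub>v fst2 u) $ k" by (simp add: bm_def)
lemma bm_hi: "2 \<le> k \<Longrightarrow> k < 2+n \<Longrightarrow> bm n R T u $ k = (T *\<^sub>v rst n u) $ (k-2)" by (simp add: bm_def)
lemma rst_bm: "T \<in> carrier_mat n n \<Longrightarrow> rst n (bm n R T u) = T *\<^sub>v rst n u"
  by (intro eq_vecI) (auto simp: bm_def)
lemma fst2_bm: "R \<in> carrier_mat 2 2 \<Longrightarrow> fst2 (bm n R T u) = R *\<^sub>v fst2 u"
  by (intro eq_vecI) (auto simp: bm_def fst2_def)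

lemma bm_bm: assumes "R \<in> carrier_mat 2 2" "R' \<in> carrier_mat 2 2" "T \<in> carrier_mat n n" "T' \<in> carrier_mat n n"
  shows "bm n R T (bm n R' T' u) = bm n (R * R') (T * T') u"
proof (rule eq_vecI)
  fix k assume "k < dim_vec (bm n (R * R') (T * T') u)"
  then have k: "k < 2+n" by simp
  show "bm n R T (bm n R' T' u) $ k = bm n (R * R') (T * T') u $ k"
  proof (cases "k < 2")
    case True
    then show ?thesis using assms k
      by (simp add: bm_lo fst2_bm assoc_mult_mat_vec[of R 2 2 R' 2 "fst2 u"])
  next
    case False
    then show ?thesis using assms k
      by (simp add: bm_hi rst_bm assoc_mult_mat_vec[of T n n T' n "rst n u"])
  qed
qed simp

lemma bm_one: assumes "u \<in> carrier_vec (2+n)" shows "bm n (1\<^sub>m 2) (1\<^sub>m n) u = u"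
proof (rule eq_vecI)
  fix k assume "k < dim_vec u"
  then have k: "k < 2+n" using assms by simp
  show "bm n (1\<^sub>m 2) (1\<^sub>m n) u $ k = u $ k"
    using k by (cases "k < 2") (auto simp: bm_def fst2_def)
qed (use assms in simp)

lemma fst2_add: "u \<in> carrier_vec (2+n) \<Longrightarrow> v \<in> carrier_vec (2+n) \<Longrightarrow> fst2 (u + v) = fst2 u + fst2 v"
  by (intro eq_vecI) (auto simp: fst2_def)
lemma rst_add: "u \<in> carrier_vec (2+n) \<Longrightarrow> v \<in> carrier_vec (2+n) \<Longrightarrow> rst n (u + v) = rst n u + rst n v"
  by (intro eq_vecI) auto
lemma fst2_smult: "u \<in> carrier_vec (2+n) \<Longrightarrow> fst2 (c \<cdot>\<^sub>v u) = c \<cdot>\<^sub>v fst2 u"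
  by (intro eq_vecI) (auto simp: fst2_def)
lemma rst_smult: "u \<in> carrier_vec (2+n) \<Longrightarrow> rst n (c \<cdot>\<^sub>v u) = c \<cdot>\<^sub>v rst n u"
  by (intro eq_vecI) auto

lemma bm_add: assumes "R \<in> carrier_mat 2 2" "T \<in> carrier_mat n n" "u \<in> carrier_vec (2+n)" "v \<in> carrier_vec (2+n)"
  shows "bm n R T (u + v) = bm n R T u + bm n R T v"
proof (rule eq_vecI)
  fix k assume "k < dim_vec (bm n R T u + bm n R T v)"
  then have k: "k < 2+n" by simp
  have f: "R *\<^sub>v fst2 (u+v) = R *\<^sub>v fst2 u + R *\<^sub>v fst2 v"
    using assms by (simp add: fst2_add mult_add_distrib_mat_vec[of R 2 2])
  have r: "T *\<^sub>v rst n (u+v) = T *\<^sub>v rst n u + T *\<^sub>v rst n v"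
    using assms by (simp add: rst_add mult_add_distrib_mat_vec[of T n n])
  show "bm n R T (u + v) $ k = (bm n R T u + bm n R T v) $ k"
    using k assms by (cases "k < 2") (auto simp: bm_def f r)
qed simp

lemma bm_smult: fixes R :: "'a::field mat" assumes "R \<in> carrier_mat 2 2" "T \<in> carrier_mat n n" "u \<in> carrier_vec (2+n)"
  shows "bm n R T (c \<cdot>\<^sub>v u) = c \<cdot>\<^sub>v bm n R T u"
proof (rule eq_vecI)
  fix k assume "k < dim_vec (c \<cdot>\<^sub>v bm n R T u)"
  then have k: "k < 2+n" by simp
  have f: "R *\<^sub>v fst2 (c \<cdot>\<^sub>v u) = c \<cdot>\<^sub>v (R *\<^sub>v fst2 u)"
    using assms by (simp add: fst2_smult mult_mat_vec[of R 2 2])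
  have r: "T *\<^sub>v rst n (c \<cdot>\<^sub>v u) = c \<cdot>\<^sub>v (T *\<^sub>v rst n u)"
    using assms by (simp add: rst_smult mult_mat_vec[of T n n])
  show "bm n R T (c \<cdot>\<^sub>v u) $ k = (c \<cdot>\<^sub>v bm n R T u) $ k"
    using k assms by (cases "k < 2") (auto simp: bm_def f r)
qed simp

lemma bm_mult:
  fixes A B :: "'a::field mat"
  assumes Ac: "A \<in> carrier_mat n n" and Bc: "B \<in> carrier_mat n n"
    and A'c: "A' \<in> carrier_mat n n" and B'c: "B' \<in> carrier_mat n n"
    and Sc: "S \<in> carrier_mat n n" and Sic: "Si \<in> carrier_mat n n" and rc: "r \<in> carrier_mat 2 2"
    and SSi: "S * Si = 1\<^sub>m n"
    and eA: "A' = r $$ (0,0) \<cdot>\<^sub>m (transpose_mat S * A * S) + r $$ (0,1) \<cdot>\<^sub>m (transpose_mat S * B * S)"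
    and eB: "B' = r $$ (1,0) \<cdot>\<^sub>m (transpose_mat S * A * S) + r $$ (1,1) \<cdot>\<^sub>m (transpose_mat S * B * S)"
    and u: "u \<in> carrier_vec (2+n)" and v: "v \<in> carrier_vec (2+n)"
  shows "bm n r Si (mult_AB n A B u v) = mult_AB n A' B' (bm n r Si u) (bm n r Si v)"
proof (rule eq_vecI)
  fix k assume "k < dim_vec (mult_AB n A' B' (bm n r Si u) (bm n r Si v))"
  then have k: "k < 2+n" by simp
  define x where "x = rst n u"
  define y where "y = rst n v"
  have xy: "x \<in> carrier_vec n" "y \<in> carrier_vec n" by (simp_all add: x_def y_def)
  have Sx: "Si *\<^sub>v x \<in> carrier_vec n" "Si *\<^sub>v y \<in> carrier_vec n" using Sic xy by auto
  have SSix: "S *\<^sub>v (Si *\<^sub>v z) = z" if "z \<in> carrier_vec n" for z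
  proof -
    have "S *\<^sub>v (Si *\<^sub>v z) = (S * Si) *\<^sub>v z" using Sc Sic that by (rule assoc_mult_mat_vec[symmetric])
    then show ?thesis using SSi that by simp
  qed
  have cs: "(Si *\<^sub>v x) \<bullet> ((transpose_mat S * M * S) *\<^sub>v (Si *\<^sub>v y)) = x \<bullet> (M *\<^sub>v y)"
    if "M \<in> carrier_mat n n" for M
    using congr_sp[OF Sc that Sx] SSix xy by simp
  have rb: "rst n (bm n r Si w) = Si *\<^sub>v rst n w" for w by (rule rst_bm[OF Sic])
  have lhs: "bm n r Si (mult_AB n A B u v) $ a = r$$(a,0) * (x \<bullet> (A *\<^sub>v y)) + r$$(a,1) * (x \<bullet> (B *\<^sub>v y))"
    if a: "a < 2" for a
  proof -
    have "bm n r Si (mult_AB n A B u v) $ a = r$$(a,0) * mult_AB n A B u v $ 0 + r$$(a,1) * mult_AB n A B u v $ 1"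
      using a by (simp only: bm_lo mv2[OF rc fst2_carrier a]) (simp add: fst2_def)
    also have "\<dots> = r$$(a,0) * (x \<bullet> (A *\<^sub>v y)) + r$$(a,1) * (x \<bullet> (B *\<^sub>v y))"
      unfolding x_def y_def by (simp only: mAB_0[OF u v Ac] mAB_1[OF u v Bc])
    finally show ?thesis .
  qed
  have rhs: "mult_AB n A' B' (bm n r Si u) (bm n r Si v) $ 0 = (Si *\<^sub>v x) \<bullet> (A' *\<^sub>v (Si *\<^sub>v y))"
    unfolding x_def y_def by (simp only: mAB_0[OF bm_carrier bm_carrier A'c] rb)
  have rhs1: "mult_AB n A' B' (bm n r Si u) (bm n r Si v) $ 1 = (Si *\<^sub>v x) \<bullet> (B' *\<^sub>v (Si *\<^sub>v y))"
    unfolding x_def y_def by (simp only: mAB_1[OF bm_carrier bm_carrier B'c] rb)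
  have TS: "transpose_mat S * M * S \<in> carrier_mat n n" if "M \<in> carrier_mat n n" for M
    using Sc that by auto
  show "bm n r Si (mult_AB n A B u v) $ k = mult_AB n A' B' (bm n r Si u) (bm n r Si v) $ k"
  proof (cases "k < 2")
    case True
    then have "k = 0 \<or> k = 1" by auto
    then show ?thesis
    proof
      assume k0: "k = 0"
      have "mult_AB n A' B' (bm n r Si u) (bm n r Si v) $ 0
          = r$$(0,0) * ((Si *\<^sub>v x) \<bullet> ((transpose_mat S * A * S) *\<^sub>v (Si *\<^sub>v y)))
          + r$$(0,1) * ((Si *\<^sub>v x) \<bullet> ((transpose_mat S * B * S) *\<^sub>v (Si *\<^sub>v y)))"
        by (subst rhs, subst eA, rule lin_sp[OF TS[OF Ac] TS[OF Bc] Sx])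
      then show ?thesis using k0 lhs[of 0] cs[OF Ac] cs[OF Bc] by simp
    next
      assume k1: "k = 1"
      have "mult_AB n A' B' (bm n r Si u) (bm n r Si v) $ 1
          = r$$(1,0) * ((Si *\<^sub>v x) \<bullet> ((transpose_mat S * A * S) *\<^sub>v (Si *\<^sub>v y)))
          + r$$(1,1) * ((Si *\<^sub>v x) \<bullet> ((transpose_mat S * B * S) *\<^sub>v (Si *\<^sub>v y)))"
        by (subst rhs1, subst eB, rule lin_sp[OF TS[OF Ac] TS[OF Bc] Sx])
      then show ?thesis using k1 lhs[of 1] cs[OF Ac] cs[OF Bc] by simp
    qed
  next
    case False
    have "rst n (mult_AB n A B u v) = 0\<^sub>v n" by simp
    then show ?thesis using False k Sic by (simp add: bm_def mAB_hi scalar_prod_def)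
  qed
qed simp

lemma inv_obtain: fixes S :: "'a::comm_ring_1 mat"
  assumes "invertible_mat S" "S \<in> carrier_mat n n"
  obtains Si where "Si \<in> carrier_mat n n" "S * Si = 1\<^sub>m n" "Si * S = 1\<^sub>m n"
proof -
  from assms obtain B where B: "S * B = 1\<^sub>m (dim_row S)" "B * S = 1\<^sub>m (dim_row B)"
    unfolding invertible_mat_def inverts_mat_def by blast
  have "dim_col B = n" using arg_cong[OF B(1), of dim_col] assms(2) by simp
  moreover have "dim_row B = n" using arg_cong[OF B(2), of dim_col] assms(2) by simp
  ultimately have Bc: "B \<in> carrier_mat n n" by auto
  show ?thesis using that[OF Bc] B assms(2) Bc by simp
qed

lemma construct:
  assumes P: "isoAB sc Bs mul \<phi>0 n A B" and A'c: "A' \<in> carrier_mat n n" and B'c: "B' \<in> carrier_mat n n"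
    and pe: "pair_equiv n A B A' B'"
  shows "alg_iso_to sc mul (2+n) (mult_AB n A' B')"
proof -
  interpret P: isoAB sc Bs mul \<phi>0 n A B by fact
  obtain S r where Sc: "S \<in> carrier_mat n n" and iS: "invertible_mat S" and rc: "r \<in> carrier_mat 2 2"
    and ir: "invertible_mat r"
    and eA: "A' = r $$ (0,0) \<cdot>\<^sub>m (transpose_mat S * A * S) + r $$ (0,1) \<cdot>\<^sub>m (transpose_mat S * B * S)"
    and eB: "B' = r $$ (1,0) \<cdot>\<^sub>m (transpose_mat S * A * S) + r $$ (1,1) \<cdot>\<^sub>m (transpose_mat S * B * S)"
    using pe unfolding pair_equiv_def by blast
  obtain Si where Sic: "Si \<in> carrier_mat n n" and SSi: "S * Si = 1\<^sub>m n" and SiS: "Si * S = 1\<^sub>m n"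
    using inv_obtain[OF iS Sc] by blast
  obtain ri where ric: "ri \<in> carrier_mat 2 2" and rri: "r * ri = 1\<^sub>m 2" and rir: "ri * r = 1\<^sub>m 2"
    using inv_obtain[OF ir rc] by blast
  define \<psi> where "\<psi> = bm n r Si"
  define \<psi>' where "\<psi>' = bm n ri S"
  have bij\<psi>: "bij_betw \<psi> (carrier_vec (2+n)) (carrier_vec (2+n))"
  proof (rule bij_betw_byWitness[where f'=\<psi>'])
    show "\<forall>a\<in>carrier_vec (2+n). \<psi>' (\<psi> a) = a"
      using ric rc Sc Sic by (simp add: \<psi>_def \<psi>'_def bm_bm rir SSi bm_one)
    show "\<forall>a\<in>carrier_vec (2+n). \<psi> (\<psi>' a) = a"
      using ric rc Sc Sic by (simp add: \<psi>_def \<psi>'_def bm_bm rri SiS bm_one)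
  qed (auto simp: \<psi>_def \<psi>'_def)
  show ?thesis unfolding alg_iso_to_iff lin_iso_def
  proof (intro exI[of _ "\<psi> \<circ> \<phi>0"] conjI allI)
    show "bij_betw (\<psi> \<circ> \<phi>0) UNIV (carrier_vec (2+n))" by (rule bij_betw_trans[OF P.bij bij\<psi>])
    fix x y
    show "(\<psi> \<circ> \<phi>0) (x + y) = (\<psi> \<circ> \<phi>0) x + (\<psi> \<circ> \<phi>0) y"
      using rc Sic by (simp add: P.padd \<psi>_def bm_add)
    show "(\<psi> \<circ> \<phi>0) (mul x y) = mult_AB n A' B' ((\<psi> \<circ> \<phi>0) x) ((\<psi> \<circ> \<phi>0) y)"
      unfolding comp_def \<psi>_def P.mAB
      by (rule bm_mult[OF P.Ac P.Bc A'c B'c Sc Sic rc SSi eA eB P.car P.car])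
  next
    fix c x
    show "(\<psi> \<circ> \<phi>0) (sc c x) = c \<cdot>\<^sub>v (\<psi> \<circ> \<phi>0) x"
      using rc Sic by (simp add: P.psc' \<psi>_def bm_smult)
  qed
qed



lemma exists_iso:
  fixes sc :: "'a::field \<Rightarrow> 'r::ab_group_add \<Rightarrow> 'r"
  assumes SA: "sqalg sc Bs mul" and d: "vector_space.dim sc (alg_sq sc mul) = 2"
  shows "\<exists>n A B \<phi>. isoAB sc Bs mul \<phi> n A B \<and> lin_indep_pair n A B"
proof -
  interpret sqalg sc Bs mul by fact
  have dW: "dim W = 2" using d by (simp add: alg_sq_def)
  obtain Bw where Bw: "Bw \<subseteq> W" "independent Bw" "W \<subseteq> span Bw" "card Bw = dim W" by (rule basis_exists)
  then obtain w1 w2 where w12: "Bw = {w1, w2}" "w1 \<noteq> w2" using dW card_2_iff by metis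
  define E where "E = extend_basis Bw"
  have E: "Bw \<subseteq> E" "independent E" "span E = UNIV" unfolding E_def
    using extend_basis_superset[OF Bw(2)] independent_extend_basis[OF Bw(2)] span_extend_basis[OF Bw(2)] by auto
  have finE: "finite E" using E(2) finiteI_independent by blast
  obtain rs where rs: "set rs = E - {w1,w2}" "distinct rs" using finite_distinct_list[of "E - {w1,w2}"] finE by auto
  define bs where "bs = w1 # w2 # rs"
  define n where "n = length rs"
  have lbs: "length bs = 2+n" by (simp add: bs_def n_def)
  have dbs: "distinct bs" using rs w12 by (auto simp: bs_def)
  have sbs: "set bs = E" using rs w12 E(1) by (auto simp: bs_def)
  have bs01: "bs!0 = w1" "bs!1 = w2" by (simp_all add: bs_def)
  define \<phi>0 where "\<phi>0 x = vec (2+n) (\<lambda>i. representation E x (bs!i))" for x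
  have rep_add: "representation E (x+y) = (\<lambda>b. representation E x b + representation E y b)" for x y
    using representation_add[OF E(2)] E(3) by auto
  have rep_sc: "representation E (sc c x) = (\<lambda>b. c * representation E x b)" for c x
    using representation_scale[OF E(2)] E(3) by auto
  have rep0: "representation E 0 = (\<lambda>b. 0)" by (rule representation_zero)
  have padd: "\<phi>0 (x+y) = \<phi>0 x + \<phi>0 y" for x y by (intro eq_vecI) (auto simp: \<phi>0_def rep_add)
  have psc: "\<phi>0 (sc c x) = c \<cdot>\<^sub>v \<phi>0 x" for c x by (intro eq_vecI) (auto simp: \<phi>0_def rep_sc)
  have psum: "\<phi>0 (sum f F) $ k = (\<Sum>x\<in>F. \<phi>0 (f x) $ k)" if "k < 2+n" for f :: "nat \<Rightarrow> 'r" and F k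
    using that by (induction F rule: infinite_finite_induct) (auto simp: \<phi>0_def rep_add rep0)
  have bsE: "bs!i \<in> E" if "i < 2+n" for i using sbs lbs that by (metis nth_mem)
  have pbs: "\<phi>0 (bs!j) = unit_vec (2+n) j" if "j < 2+n" for j
    using that by (intro eq_vecI) (auto simp: \<phi>0_def representation_basis[OF E(2) bsE[OF that]] nth_eq_iff_index_eq[OF dbs] lbs)
  have inj: "x = y" if "\<phi>0 x = \<phi>0 y" for x y
  proof -
    have "representation E x b = representation E y b" if "b \<in> E" for b
    proof -
      obtain i where i: "i < 2+n" "b = bs!i" using \<open>b \<in> E\<close> sbs lbs by (metis in_set_conv_nth)
      have "\<phi>0 x $ i = \<phi>0 y $ i" using \<open>\<phi>0 x = \<phi>0 y\<close> by simp
      then show ?thesis using i by (simp add: \<phi>0_def)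
    qed
    then have "(\<Sum>b\<in>E. sc (representation E x b) b) = (\<Sum>b\<in>E. sc (representation E y b) b)" by simp
    then show ?thesis using sum_representation_eq[OF E(2) _ finE order_refl] E(3) by simp
  qed
  have surj: "\<phi>0 (\<Sum>i<2+n. sc (v$i) (bs!i)) = v" if v: "v \<in> carrier_vec (2+n)" for v
  proof (rule eq_vecI)
    fix k assume "k < dim_vec v" then have k: "k < 2+n" using v by simp
    have "\<phi>0 (\<Sum>i<2+n. sc (v$i) (bs!i)) $ k = (\<Sum>i<2+n. \<phi>0 (sc (v$i) (bs!i)) $ k)"
      by (rule psum[OF k])
    also have "\<dots> = (\<Sum>i<2+n. v$i * unit_vec (2+n) i $ k)"
      using k by (intro sum.cong refl) (simp add: psc pbs)
    also have "\<dots> = v $ k" using k by (simp add: if_distrib cong: if_cong)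
    finally show "\<phi>0 (\<Sum>i<2+n. sc (v$i) (bs!i)) $ k = v $ k" .
  qed (use v in \<open>simp add: \<phi>0_def\<close>)
  have li: "lin_iso sc (2+n) \<phi>0"
    unfolding lin_iso_def bij_betw_def
  proof (intro conjI allI)
    show "inj_on \<phi>0 UNIV" by (rule inj_onI) (rule inj)
    show "range \<phi>0 = carrier_vec (2+n)"
    proof
      show "range \<phi>0 \<subseteq> carrier_vec (2+n)" by (auto simp: \<phi>0_def)
      show "carrier_vec (2+n) \<subseteq> range \<phi>0"
      proof
        fix v :: "'a vec" assume "v \<in> carrier_vec (2+n)"
        then have "v = \<phi>0 (\<Sum>i<2+n. sc (v$i) (bs!i))" using surj by simp
        then show "v \<in> range \<phi>0" by blast
      qed
    qed
    show "\<phi>0 (x + y) = \<phi>0 x + \<phi>0 y" for x y by (rule padd)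
    show "\<phi>0 (sc c x) = c \<cdot>\<^sub>v \<phi>0 x" for c x by (rule psc)
  qed
  have C: "coord sc Bs mul \<phi>0 (2+n)" by (intro coord.intro coord_axioms.intro SA li)
  interpret C: coord sc Bs mul \<phi>0 "2+n" by (rule C)
  have Wz: "\<phi>0 w $ k = 0" if w: "w \<in> W" and k: "2 \<le> k" "k < 2+n" for w k
  proof (rule ccontr)
    assume ne: "\<phi>0 w $ k \<noteq> 0"
    have "representation E w = representation Bw w"
      by (rule representation_extend[OF E(2) _ E(1)]) (use w Bw(3) in auto)
    then have "representation Bw w (bs!k) \<noteq> 0" using ne k by (simp add: \<phi>0_def)
    then have "bs!k \<in> Bw" by (rule representation_ne_zero)
    then have "bs!k = bs!0 \<or> bs!k = bs!1" using w12 bs01 by auto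
    moreover have "bs!k \<noteq> bs!0" using nth_eq_iff_index_eq[OF dbs, of k 0] k lbs by simp
    moreover have "bs!k \<noteq> bs!1" using nth_eq_iff_index_eq[OF dbs, of k 1] k lbs by simp
    ultimately show False by blast
  qed
  define A where "A = mat n n (\<lambda>(i,j). \<phi>0 (mul (bs!(i+2)) (bs!(j+2))) $ 0)"
  define B where "B = mat n n (\<lambda>(i,j). \<phi>0 (mul (bs!(i+2)) (bs!(j+2))) $ 1)"
  have Ac: "A \<in> carrier_mat n n" and Bc: "B \<in> carrier_mat n n" by (simp_all add: A_def B_def)
  have w1W: "w1 \<in> W" and w2W: "w2 \<in> W" using Bw(1) w12 by auto
  have mulz: "mul (bs!i) y = 0" if "i < 2" for i y
  proof -
    have "i = 0 \<or> i = 1" using that by auto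
    then have "bs!i \<in> W" using w1W w2W bs01 by auto
    then show ?thesis by (rule mulW_l)
  qed
  have mulz': "mul y (bs!j) = 0" if "j < 2" for j y
  proof -
    have "j = 0 \<or> j = 1" using that by auto
    then have "bs!j \<in> W" using w1W w2W bs01 by auto
    then show ?thesis by (rule mulW_r)
  qed
  have expand: "\<phi>0 (mul x y) $ k = (\<Sum>i<n. \<Sum>j<n. \<phi>0 x $ (i+2) * \<phi>0 y $ (j+2) * \<phi>0 (mul (bs!(i+2)) (bs!(j+2))) $ k)"
    if k: "k < 2+n" for x y k
  proof -
    have "\<phi>0 (mul x y) $ k = (\<Sum>i<2+n. \<Sum>j<2+n. \<phi>0 x $ i * \<phi>0 y $ j * \<phi>0 (mul (bs!i) (bs!j)) $ k)"
      by (rule C.mul_expand[where g="(!) bs", OF pbs k])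
    also have "\<dots> = (\<Sum>i<n. \<Sum>j<n. \<phi>0 x $ (i+2) * \<phi>0 y $ (j+2) * \<phi>0 (mul (bs!(i+2)) (bs!(j+2))) $ k)"
      by (simp only: sum_split2) (simp add: mulz mulz' k)
    finally show ?thesis .
  qed
  have mult: "\<phi>0 (mul x y) = mult_AB n A B (\<phi>0 x) (\<phi>0 y)" for x y
  proof (rule eq_vecI)
    fix k assume "k < dim_vec (mult_AB n A B (\<phi>0 x) (\<phi>0 y))" then have k: "k < 2+n" by simp
    have "k = 0 \<or> k = 1 \<or> 2 \<le> k" by auto
    then show "\<phi>0 (mul x y) $ k = mult_AB n A B (\<phi>0 x) (\<phi>0 y) $ k"
    proof (elim disjE)
      assume k0: "k = 0"
      have "mult_AB n A B (\<phi>0 x) (\<phi>0 y) $ 0 = (\<Sum>i<n. \<Sum>j<n. rst n (\<phi>0 x) $ i * A$$(i,j) * rst n (\<phi>0 y) $ j)"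
        by (simp only: mAB_0[OF C.car C.car Ac] SF[OF rst_carrier rst_carrier Ac])
      then show ?thesis using k0 expand[OF k, of x y] by (auto simp: A_def mult_ac intro!: sum.cong)
    next
      assume k1: "k = 1"
      have "mult_AB n A B (\<phi>0 x) (\<phi>0 y) $ 1 = (\<Sum>i<n. \<Sum>j<n. rst n (\<phi>0 x) $ i * B$$(i,j) * rst n (\<phi>0 y) $ j)"
        by (simp only: mAB_1[OF C.car C.car Bc] SF[OF rst_carrier rst_carrier Bc])
      then show ?thesis using k1 expand[OF k, of x y] by (auto simp: B_def mult_ac intro!: sum.cong)
    next
      assume k2: "2 \<le> k"
      show ?thesis using k k2 expand[OF k, of x y] by (simp add: Wz[OF mul_in_W] mAB_hi)
    qed
  qed simp
  have iso: "isoAB sc Bs mul \<phi>0 n A B" by (intro isoAB.intro isoAB_axioms.intro C Ac Bc mult)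
  interpret I: isoAB sc Bs mul \<phi>0 n A B by (rule iso)
  have ind: "lin_indep_pair n A B"
    unfolding lin_indep_pair_def
  proof (intro allI impI conjI)
    fix a b assume ab: "a \<cdot>\<^sub>m A + b \<cdot>\<^sub>m B = 0\<^sub>m n n"
    have van: "a * \<phi>0 (mul x y) $ 0 + b * \<phi>0 (mul x y) $ 1 = 0" for x y
    proof -
      have "a * \<phi>0 (mul x y) $ 0 + b * \<phi>0 (mul x y) $ 1 = rst n (\<phi>0 x) \<bullet> ((a \<cdot>\<^sub>m A + b \<cdot>\<^sub>m B) *\<^sub>v rst n (\<phi>0 y))"
        by (simp only: I.prod0 I.prod1 lin_sp[OF Ac Bc rst_carrier rst_carrier])
      also have "\<dots> = 0" by (simp add: ab scalar_prod_def)
      finally show ?thesis .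
    qed
    have vanW: "a * \<phi>0 w $ 0 + b * \<phi>0 w $ 1 = 0" if "w \<in> W" for w
      using that
    proof (induction rule: span_induct_alt)
      case base show ?case by simp
    next
      case (step c x z)
      then obtain u v where x: "x = mul u v" by blast
      have "a * \<phi>0 (sc c x + z) $ 0 + b * \<phi>0 (sc c x + z) $ 1
          = c * (a * \<phi>0 x $ 0 + b * \<phi>0 x $ 1) + (a * \<phi>0 z $ 0 + b * \<phi>0 z $ 1)"
        by (simp add: C.padd_i C.psc algebra_simps)
      then show ?case using step.IH van[of u v] x by simp
    qed
    show "a = 0" using vanW[OF w1W] pbs[of 0] bs01 by simp
    show "b = 0" using vanW[OF w2W] pbs[of 1] bs01 by simp
  qed
  show ?thesis using iso ind by blast
qed



theorem lemma3p3:
  fixes sc :: "'a::field \<Rightarrow> 'r::ab_group_add \<Rightarrow> 'r"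
    and mul :: "'r \<Rightarrow> 'r \<Rightarrow> 'r"
  assumes "alg_closed TYPE('a)"
    and "(2::'a) \<noteq> 0"
    and "fd_algebra sc mul"
    and "alg_cube sc mul = {0}"
    and "vector_space.dim sc (alg_sq sc mul) = 2"
  shows "\<exists>n A B. n \<ge> 2 \<and> A \<in> carrier_mat n n \<and> B \<in> carrier_mat n n \<and>
           lin_indep_pair n A B \<and> alg_iso_to sc mul (2 + n) (mult_AB n A B) \<and>
           (\<forall>n' A' B'. A' \<in> carrier_mat n' n' \<and> B' \<in> carrier_mat n' n' \<and> lin_indep_pair n' A' B' \<longrightarrow>
              (alg_iso_to sc mul (2 + n') (mult_AB n' A' B') \<longleftrightarrow>
               n' = n \<and> pair_equiv n A B A' B'))"
proof -
  from assms(3) obtain Bs where fdv: "finite_dimensional_vector_space sc Bs"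
    unfolding fd_algebra_def by blast
  have SA: "sqalg sc Bs mul"
    using fdv assms(3,4) unfolding fd_algebra_def by (intro sqalg.intro sqalg_axioms.intro) auto
  obtain n A B \<phi>0 where P: "isoAB sc Bs mul \<phi>0 n A B" and ind: "lin_indep_pair n A B"
    using exists_iso[OF SA assms(5)] by blast
  interpret P: isoAB sc Bs mul \<phi>0 n A B by (rule P)
  have n2: "n \<ge> 2" by (rule indep_ge2[OF P.Ac P.Bc ind])
  have iso0: "alg_iso_to sc mul (2+n) (mult_AB n A B)" unfolding alg_iso_to_iff using P.li P.mAB by blast
  have uniq: "alg_iso_to sc mul (2 + n') (mult_AB n' A' B') \<longleftrightarrow> n' = n \<and> pair_equiv n A B A' B'"
    if H: "A' \<in> carrier_mat n' n'" "B' \<in> carrier_mat n' n'" "lin_indep_pair n' A' B'" for n' A' B'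
  proof
    assume "alg_iso_to sc mul (2 + n') (mult_AB n' A' B')"
    then obtain \<phi> where li: "lin_iso sc (2+n') \<phi>" and m: "\<And>x y. \<phi> (mul x y) = mult_AB n' A' B' (\<phi> x) (\<phi> y)"
      unfolding alg_iso_to_iff by blast
    have Q: "isoAB sc Bs mul \<phi> n' A' B'"
      by (intro isoAB.intro isoAB_axioms.intro coord.intro coord_axioms.intro SA li H m)
    interpret Q: isoAB sc Bs mul \<phi> n' A' B' by (rule Q)
    have "2+n = 2+n'" using P.dimUNIV Q.dimUNIV by simp
    then have nn: "n' = n" by simp
    have "pair_equiv n A B A' B'" using two_iso[OF P Q[unfolded nn] ind] H nn by auto
    then show "n' = n \<and> pair_equiv n A B A' B'" using nn by simp
  next
    assume "n' = n \<and> pair_equiv n A B A' B'"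
    then show "alg_iso_to sc mul (2 + n') (mult_AB n' A' B')" using construct[OF P] H by auto
  qed
  show ?thesis
    apply (rule exI[of _ n], rule exI[of _ A], rule exI[of _ B])
    using n2 P.Ac P.Bc ind iso0 uniq by blast
qed



end
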